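(* Let $n$ be even and $F\colon\mathbb F_2^n\to\mathbb F_2^n$ a quadratic APN function with associated $\mathcal V_F=\{V_b\colon b\in\mathbb F_2^n\setminus\{0\},\ \dim(V_b)\ge1\}$. Then $\dim(V_b)$ is even for every $V_b\in\mathcal V_F$.
   Context: $\langle\cdot,\cdot\rangle$ is the standard dot product. $F$ is APN if for every $a\ne0$ and $c$, $F(x)+F(x+a)=c$ has at most 2 solutions; quadratic if each component $x\mapsto\langle b,F(x)\rangle$ is a quadratic form plus an affine function. With $D_{F,a}(x)=F(x)+F(x+a)$, $H_b=\{x:\langle b,x\rangle=0\}$, $\overline{H_b}=\{x:\langle b,x\rangle=1\}$: $T_b=\{a:\mathrm{Im}(D_{F,a})=H_b\}\cup\{0\}$, $\overline{T_b}=\{a:\mathrm{Im}(D_{F,a})=\overline{H_b}\}$, $V_b=T_b\cup\overline{T_b}$ (a linear subspace). *)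

theory Defs
  imports "HOL-Analysis.Analysis" "HOL-Library.Z2"
begin

text \<open>Vectors of F_2^n are modelled as \<open>bit ^ 'n\<close>, with n = CARD('n).\<close>

definition dotp :: "bit ^ 'n \<Rightarrow> bit ^ 'n \<Rightarrow> bit" where
  "dotp u v = (\<Sum>i\<in>UNIV. u $ i * v $ i)"

definition is_APN :: "(bit ^ 'n \<Rightarrow> bit ^ 'n) \<Rightarrow> bool" where
  "is_APN F \<longleftrightarrow> (\<forall>a c. a \<noteq> 0 \<longrightarrow> card {x. F x + F (x + a) = c} \<le> 2)"

definition is_quadratic :: "(bit ^ 'n \<Rightarrow> bit ^ 'n) \<Rightarrow> bool" where
  "is_quadratic F \<longleftrightarrow> (\<forall>b. \<exists>(Q :: 'n \<Rightarrow> 'n \<Rightarrow> bit) (l :: 'n \<Rightarrow> bit) (c :: bit).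
      \<forall>x. dotp b (F x) = (\<Sum>i\<in>UNIV. \<Sum>j\<in>UNIV. Q i j * x $ i * x $ j)
                         + (\<Sum>i\<in>UNIV. l i * x $ i) + c)"

definition Dder :: "(bit ^ 'n \<Rightarrow> bit ^ 'n) \<Rightarrow> bit ^ 'n \<Rightarrow> bit ^ 'n \<Rightarrow> bit ^ 'n" where
  "Dder F a x = F x + F (x + a)"

definition Hyp :: "bit ^ 'n \<Rightarrow> (bit ^ 'n) set" where
  "Hyp b = {x. dotp b x = 0}"

definition Hypbar :: "bit ^ 'n \<Rightarrow> (bit ^ 'n) set" where
  "Hypbar b = {x. dotp b x = 1}"

definition Tset :: "(bit ^ 'n \<Rightarrow> bit ^ 'n) \<Rightarrow> bit ^ 'n \<Rightarrow> (bit ^ 'n) set" where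
  "Tset F b = {a. range (Dder F a) = Hyp b} \<union> {0}"

definition Tbarset :: "(bit ^ 'n \<Rightarrow> bit ^ 'n) \<Rightarrow> bit ^ 'n \<Rightarrow> (bit ^ 'n) set" where
  "Tbarset F b = {a. range (Dder F a) = Hypbar b}"

definition Vset :: "(bit ^ 'n \<Rightarrow> bit ^ 'n) \<Rightarrow> bit ^ 'n \<Rightarrow> (bit ^ 'n) set" where
  "Vset F b = Tset F b \<union> Tbarset F b"

definition dimF2 :: "(bit ^ 'n) set \<Rightarrow> nat" where
  "dimF2 V = vector_space.dim ((*s) :: bit \<Rightarrow> bit ^ 'n \<Rightarrow> bit ^ 'n) V"

end

theory Submission
  imports Defs
begin
declare add_bit_eq_xor[simp del] mult_bit_eq_and[simp del]

lemma bit_UNIV: "(UNIV :: bit set) = {0, 1}"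
  using bit_not_zero_iff by auto

instance bit :: finite
  by standard (simp add: bit_UNIV)

lemma card_vec_bit: "CARD(bit ^ 'n) = 2 ^ CARD('n)"
  by (simp add: bit_UNIV numeral_2_eq_2)

lemma card_bit: "CARD(bit) = 2"
  by (simp add: bit_UNIV)

lemma bit_add_self: "(a::bit) + a = 0"
  by (cases a) simp_all

lemma bit_add_eq0: "(a::bit) + c = 0 \<longleftrightarrow> a = c"
  by (cases a; cases c) simp_all

lemma vec_add_self [simp]: "(x::bit^'n) + x = 0"
  by (simp add: vec_eq_iff bit_add_self)

lemma dotp_add_right: "dotp u (v + w) = dotp u v + dotp u w"
  unfolding dotp_def by (simp add: distrib_left sum.distrib)

lemma dotp_add_left: "dotp (u + v) w = dotp u w + dotp v w"
  unfolding dotp_def by (simp add: distrib_right sum.distrib)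

lemma dotp_zero_right: "dotp u 0 = 0"
  unfolding dotp_def by simp

lemma dotp_axis_left: "dotp (axis i 1) z = z $ i"
proof -
  have "(\<Sum>j\<in>UNIV. axis i 1 $ j * z $ j) = (\<Sum>j\<in>UNIV. if j = i then z $ i else 0)"
    by (rule sum.cong) (auto simp: axis_def)
  thus ?thesis unfolding dotp_def by simp
qed

lemma dotp_axis_right: "dotp z (axis i 1) = z $ i"
proof -
  have "(\<Sum>j\<in>UNIV. z $ j * axis i 1 $ j) = (\<Sum>j\<in>UNIV. if j = i then z $ i else 0)"
    by (rule sum.cong) (auto simp: axis_def)
  thus ?thesis unfolding dotp_def by simp
qed

definition sg :: "bit \<Rightarrow> int" where "sg x = (if x = 0 then 1 else -1)"

lemma sg_add: "sg (x + y) = sg x * sg y"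
  by (cases x; cases y) (simp_all add: sg_def)

lemma sum_sg_balanced:
  fixes A :: "'a set" and h :: "'a \<Rightarrow> bit"
  assumes "bij_betw t A A" "\<And>x. x \<in> A \<Longrightarrow> h (t x) = h x + 1"
  shows "(\<Sum>x\<in>A. sg (h x)) = 0"
proof -
  have "(\<Sum>x\<in>A. sg (h x)) = (\<Sum>x\<in>A. sg (h (t x)))"
    using sum.reindex_bij_betw[OF assms(1), of "\<lambda>x. sg (h x)"] by simp
  also have "\<dots> = (\<Sum>x\<in>A. - sg (h x))"
    by (rule sum.cong) (auto simp: assms(2) sg_add sg_def)
  also have "\<dots> = - (\<Sum>x\<in>A. sg (h x))" by (simp add: sum_negf)
  finally show ?thesis by simp
qed

lemma bij_translate:
  fixes z :: "bit^'n"
  assumes "\<And>x. x \<in> A \<Longrightarrow> x + z \<in> A"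
  shows "bij_betw (\<lambda>x. x + z) A A"
  by (rule bij_betw_byWitness[where f'="\<lambda>x. x + z"]) (auto simp: assms add.assoc)

lemma card_span_indep:
  fixes B :: "(bit^'n) set"
  assumes ind: "vec.independent B"
  shows "card (vec.span B) = 2 ^ card B"
proof -
  have fin: "finite B" using ind vec.finiteI_independent by blast
  define ch where "ch S v = (if v \<in> S then 1 else (0::bit))" for S :: "(bit^'n) set" and v
  have key: "(\<Sum>v\<in>B. ch S v *s v) = \<Sum>S" if "S \<subseteq> B" for S
  proof -
    have "(\<Sum>v\<in>B. ch S v *s v) = (\<Sum>v\<in>B. if v \<in> S then v else 0)"
      by (rule sum.cong) (auto simp: ch_def)
    also have "\<dots> = (\<Sum>v\<in>{v\<in>B. v\<in>S}. v)" using fin by (simp add: sum.inter_filter)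
    also have "{v\<in>B. v\<in>S} = S" using that by auto
    finally show ?thesis by simp
  qed
  have "bij_betw (\<lambda>S. \<Sum>S) (Pow B) (vec.span B)"
  proof (rule bij_betwI')
    fix S T assume S: "S \<in> Pow B" and T: "T \<in> Pow B"
    show "(\<Sum>S = \<Sum>T) = (S = T)"
    proof
      assume eq: "\<Sum>S = \<Sum>T"
      have "(\<Sum>v\<in>B. (ch S v + ch T v) *s v) = (\<Sum>v\<in>B. ch S v *s v) + (\<Sum>v\<in>B. ch T v *s v)"
        by (simp add: vec.scale_left_distrib sum.distrib)
      also have "\<dots> = 0" using key S T eq by simp
      finally have z: "(\<Sum>v\<in>B. (ch S v + ch T v) *s v) = 0" .
      have "\<forall>c. (\<Sum>v\<in>B. c v *s v) = 0 \<longrightarrow> (\<forall>v\<in>B. c v = 0)"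
        using ind vec.independent_explicit by blast
      from this[rule_format, OF z] have "\<forall>v\<in>B. ch S v + ch T v = 0" by blast
      hence "\<forall>v\<in>B. ch S v = ch T v" by (simp add: bit_add_eq0)
      hence "\<forall>v\<in>B. (v \<in> S) = (v \<in> T)" unfolding ch_def by (metis zero_neq_one)
      thus "S = T" using S T by blast
    qed simp
  next
    fix S assume S: "S \<in> Pow B"
    show "\<Sum>S \<in> vec.span B" unfolding vec.span_finite[OF fin] using key[of S] S
      by (intro image_eqI[where x="ch S"]) auto
  next
    fix y assume "y \<in> vec.span B"
    then obtain u where y: "y = (\<Sum>v\<in>B. u v *s v)" using vec.span_finite[OF fin] by auto
    define S where "S = {v\<in>B. u v = 1}"
    have "y = (\<Sum>v\<in>B. ch S v *s v)"
      unfolding y by (rule sum.cong) (auto simp: ch_def S_def)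
    also have "\<dots> = \<Sum>S" using key[of S] by (simp add: S_def)
    finally show "\<exists>S\<in>Pow B. y = \<Sum>S" using S_def by auto
  qed
  hence "card (vec.span B) = card (Pow B)" by (simp add: bij_betw_same_card)
  thus ?thesis using fin by (simp add: card_Pow)
qed

lemma card_subspace:
  fixes R :: "(bit^'n) set"
  assumes "vec.subspace R"
  shows "card R = 2 ^ vec.dim R"
proof -
  obtain B where B: "B \<subseteq> R" "vec.independent B" "R \<subseteq> vec.span B" "card B = vec.dim R"
    using vec.basis_exists by blast
  have "vec.span B \<subseteq> R" using vec.span_minimal[OF B(1) assms] .
  hence "R = vec.span B" using B(3) by auto
  thus ?thesis using card_span_indep[OF B(2)] B(4) by simp
qed

lemma int_sq_not_odd_pow2: "(W::int)^2 \<noteq> 2 ^ (2*m+1)"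
proof (induction m arbitrary: W)
  case 0
  show ?case
  proof
    assume h: "W^2 = 2^(2*0+1)"
    hence "even (W^2)" by simp
    hence "even W" by simp
    then obtain V where "W = 2*V" by blast
    with h have "4 * V^2 = 2" by (simp add: power2_eq_square)
    hence "2 * V^2 = (1::int)" by simp
    hence "even (1::int)" by (metis dvd_triv_left)
    thus False by simp
  qed
next
  case (Suc m)
  show ?case
  proof
    assume h: "W^2 = 2^(2*Suc m+1)"
    hence "even (W^2)" by simp
    hence "even W" by simp
    then obtain V where "W = 2*V" by blast
    with h have "4 * V^2 = 4 * 2^(2*m+1)" by (simp add: power2_eq_square)
    hence "V^2 = 2^(2*m+1)" by simp
    with Suc.IH show False by blast
  qed
qed

lemma bit_cancel: "(a::bit) + (a + b + c) = b + c"
  by (cases a; cases b; cases c) simp_all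

lemma bit_one_add_eq_one: "(1::bit) + t = 1 \<longleftrightarrow> t = 0"
  by (cases t) simp_all

lemma bit_double_zero: "(a::bit) = a + a \<Longrightarrow> a = 0"
  by (cases a) simp_all

lemma radical_even:
  fixes g :: "bit^'n \<Rightarrow> bit" and \<beta> :: "bit^'n \<Rightarrow> bit^'n \<Rightarrow> bit"
  assumes polar: "\<And>x y. g (x + y) = g x + g y + \<beta> x y"
    and lin1: "\<And>x x' y. \<beta> (x + x') y = \<beta> x y + \<beta> x' y"
    and lin2: "\<And>x y y'. \<beta> x (y + y') = \<beta> x y + \<beta> x y'"
    and N: "even CARD('n)"
  shows "even (vec.dim {a. \<forall>x. \<beta> x a = 0})"
proof -
  define R where "R = {a. \<forall>x. \<beta> x a = 0}"
  define Nn where "Nn = CARD('n)"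
  have b0l: "\<beta> 0 y = 0" for y using lin1[of 0 0 y] by (intro bit_double_zero) simp
  have b0r: "\<beta> x 0 = 0" for x using lin2[of x 0 0] by (intro bit_double_zero) simp
  have g0: "g 0 = 0" using polar[of 0 0] b0l[of 0] by (simp add: bit_add_self)
  have R0: "0 \<in> R" using b0r by (simp add: R_def)
  have Radd: "y + y' \<in> R" if "y \<in> R" "y' \<in> R" for y y'
    using that by (simp add: R_def lin2)
  have sub: "vec.subspace R"
    unfolding vec.subspace_def
  proof (intro conjI ballI allI)
    fix c :: bit and x assume "x \<in> R"
    thus "c *s x \<in> R" using R0 by (cases c) simp_all
  qed (use R0 Radd in auto)
  have cardR: "card R = 2 ^ vec.dim R" by (rule card_subspace[OF sub])
  have cardU: "card (UNIV :: (bit^'n) set) = 2 ^ Nn" using card_vec_bit Nn_def by simp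
  define G where "G w x = g x + dotp w x" for w x
  have polG: "G w (x + y) = G w x + G w y + \<beta> x y" for w x y
    by (simp add: G_def polar dotp_add_right ac_simps)
  have P: "(\<Sum>x\<in>UNIV. sg (\<beta> x z)) = (if z \<in> R then 2^Nn else 0)" for z
  proof (cases "z \<in> R")
    case True
    have "(\<Sum>x\<in>UNIV. sg (\<beta> x z)) = (\<Sum>x\<in>(UNIV::(bit^'n) set). 1)"
      by (rule sum.cong[OF refl]) (use True in \<open>simp add: R_def sg_def\<close>)
    thus ?thesis using True by (simp add: card_bit Nn_def)
  next
    case False
    then obtain x0 where x0: "\<beta> x0 z = 1" by (auto simp: R_def)
    have "(\<Sum>x\<in>UNIV. sg (\<beta> x z)) = 0"
      by (rule sum_sg_balanced[where t="\<lambda>x. x + x0"]) (auto intro: bij_translate simp: lin1 x0)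
    thus ?thesis using False by simp
  qed
  have Sq: "(\<Sum>x\<in>UNIV. sg (G w x))^2 = 2^Nn * (\<Sum>z\<in>R. sg (G w z))" for w
  proof -
    have "(\<Sum>x\<in>UNIV. sg (G w x))^2 = (\<Sum>x\<in>UNIV. \<Sum>y\<in>UNIV. sg (G w x) * sg (G w y))"
      by (simp add: power2_eq_square sum_product)
    also have "\<dots> = (\<Sum>x\<in>UNIV. \<Sum>z\<in>UNIV. sg (G w x) * sg (G w (x + z)))"
    proof (rule sum.cong[OF refl])
      fix x :: "bit^'n"
      have bij: "bij_betw (\<lambda>z. z + x) UNIV UNIV" by (rule bij_translate) simp
      show "(\<Sum>y\<in>UNIV. sg (G w x) * sg (G w y)) = (\<Sum>z\<in>UNIV. sg (G w x) * sg (G w (x + z)))"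
        using sum.reindex_bij_betw[OF bij, of "\<lambda>y. sg (G w x) * sg (G w y)"] by (simp add: add.commute)
    qed
    also have "\<dots> = (\<Sum>x\<in>UNIV. \<Sum>z\<in>UNIV. sg (G w z) * sg (\<beta> x z))"
      by (intro sum.cong refl) (simp only: polG sg_add[symmetric] bit_cancel)
    also have "\<dots> = (\<Sum>z\<in>UNIV. \<Sum>x\<in>UNIV. sg (G w z) * sg (\<beta> x z))" by (rule sum.swap)
    also have "\<dots> = (\<Sum>z\<in>UNIV. sg (G w z) * (if z \<in> R then 2^Nn else 0))"
      by (intro sum.cong refl) (simp add: sum_distrib_left[symmetric] P)
    also have "\<dots> = (\<Sum>z\<in>UNIV. if z \<in> R then sg (G w z) * 2^Nn else 0)"
      by (intro sum.cong refl) simp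
    also have "\<dots> = (\<Sum>z\<in>R. sg (G w z) * 2^Nn)"
      by (simp add: sum.If_cases)
    finally show ?thesis by (simp add: sum_distrib_left mult.commute)
  qed
  have Tval: "(\<Sum>z\<in>R. sg (G w z)) = int (card R) \<or> (\<Sum>z\<in>R. sg (G w z)) = 0" for w
  proof (cases "\<forall>z\<in>R. G w z = 0")
    case True
    have "(\<Sum>z\<in>R. sg (G w z)) = (\<Sum>z\<in>R. 1)"
      by (rule sum.cong[OF refl]) (use True in \<open>simp add: sg_def\<close>)
    thus ?thesis by simp
  next
    case False
    then obtain z0 where z0: "z0 \<in> R" "G w z0 = 1" by auto
    have "(\<Sum>z\<in>R. sg (G w z)) = 0"
    proof (rule sum_sg_balanced[where t="\<lambda>z. z + z0"])
      show "bij_betw (\<lambda>z. z + z0) R R" by (rule bij_translate) (simp add: Radd z0(1))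
      fix z assume "z \<in> R"
      have "\<beta> z z0 = 0" using z0(1) unfolding R_def by simp
      thus "G w (z + z0) = G w z + 1" by (simp add: polG z0(2))
    qed
    thus ?thesis by simp
  qed
  have Dsum: "(\<Sum>w\<in>UNIV. sg (dotp w z)) = (if z = 0 then 2^Nn else 0)" for z :: "bit^'n"
  proof (cases "z = 0")
    case True thus ?thesis by (simp add: dotp_zero_right sg_def card_bit Nn_def)
  next
    case False
    then obtain i where "z $ i \<noteq> 0" by (auto simp: vec_eq_iff)
    hence zi: "z $ i = 1" by simp
    have "(\<Sum>w\<in>UNIV. sg (dotp w z)) = 0"
      by (rule sum_sg_balanced[where t="\<lambda>w. w + axis i 1"])
        (auto intro: bij_translate simp: dotp_add_left dotp_axis_left zi)
    thus ?thesis using False by simp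
  qed
  have "(\<Sum>w\<in>UNIV. \<Sum>z\<in>R. sg (G w z)) = (\<Sum>z\<in>R. \<Sum>w\<in>UNIV. sg (G w z))" by (rule sum.swap)
  also have "\<dots> = (\<Sum>z\<in>R. sg (g z) * (if z = 0 then 2^Nn else 0))"
    by (intro sum.cong refl) (simp add: G_def sg_add sum_distrib_left[symmetric] Dsum)
  also have "\<dots> = (\<Sum>z\<in>R. if z = 0 then sg (g z) * 2^Nn else 0)" by (intro sum.cong refl) simp
  also have "\<dots> = 2^Nn" using R0 g0 by (simp add: sum.delta sg_def)
  finally have sumT: "(\<Sum>w\<in>UNIV. \<Sum>z\<in>R. sg (G w z)) = 2^Nn" .
  have "\<exists>w. (\<Sum>z\<in>R. sg (G w z)) \<noteq> 0"
  proof (rule ccontr)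
    assume "\<not> ?thesis"
    hence "(\<Sum>w\<in>UNIV. \<Sum>z\<in>R. sg (G w z)) = 0" by simp
    with sumT show False by simp
  qed
  then obtain w where w: "(\<Sum>z\<in>R. sg (G w z)) \<noteq> 0" by blast
  define W where "W = (\<Sum>x\<in>UNIV. sg (G w x))"
  have Wsq: "W^2 = 2^(Nn + vec.dim R)"
    using Sq[of w] Tval[of w] w cardR by (simp add: W_def power_add)
  show ?thesis
  proof (rule ccontr)
    assume odd: "\<not> even (vec.dim {a. \<forall>x. \<beta> x a = 0})"
    hence "odd (Nn + vec.dim R)" using N by (simp add: Nn_def R_def)
    then obtain m where "Nn + vec.dim R = 2*m+1" using oddE by blast
    with Wsq int_sq_not_odd_pow2[of W m] show False by simp
  qed
qed

lemma card_hyper: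
  fixes b :: "bit^'n" assumes "b \<noteq> 0"
  shows "2 * card {y. dotp b y = e} = 2 ^ CARD('n)"
proof -
  obtain i where "b $ i \<noteq> 0" using assms by (auto simp: vec_eq_iff)
  hence bi: "b $ i = 1" by simp
  define u where "u = (axis i 1 :: bit^'n)"
  have du: "dotp b u = 1" using bi by (simp add: u_def dotp_axis_right)
  define A0 where "A0 = {y. dotp b y = 0}"
  define A1 where "A1 = {y. dotp b y = 1}"
  have "bij_betw (\<lambda>y. y + u) A0 A1"
    by (rule bij_betw_byWitness[where f'="\<lambda>y. y + u"]) (auto simp: A0_def A1_def dotp_add_right du add.assoc)
  hence c01: "card A0 = card A1" by (rule bij_betw_same_card)
  have "A0 \<union> A1 = UNIV" "A0 \<inter> A1 = {}" by (auto simp: A0_def A1_def)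
  hence "card A0 + card A1 = 2 ^ CARD('n)" using card_Un_disjoint[of A0 A1] card_vec_bit by (simp add: card_bit)
  moreover have "e = 0 \<or> e = 1" by (cases e) auto
  ultimately show ?thesis using c01 unfolding A0_def A1_def by auto
qed

lemma APN_range:
  fixes F :: "bit^'n \<Rightarrow> bit^'n"
  assumes "is_APN F" "a \<noteq> 0"
  shows "2 ^ CARD('n) \<le> 2 * card (range (Dder F a))"
proof -
  have "card (UNIV :: (bit^'n) set) = card (\<Union>y\<in>range (Dder F a). {x. Dder F a x = y})"
    by (rule arg_cong[where f=card]) auto
  also have "\<dots> \<le> (\<Sum>y\<in>range (Dder F a). card {x. Dder F a x = y})" by (rule card_UN_le) simp
  also have "\<dots> \<le> (\<Sum>y\<in>range (Dder F a). 2)"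
    by (rule sum_mono) (use assms in \<open>auto simp: is_APN_def Dder_def\<close>)
  also have "\<dots> = 2 * card (range (Dder F a))" by simp
  finally show ?thesis by (simp add: card_bit)
qed

lemma bit_rearr1: "(a::bit) + b + e + (u + v) + c = (a + u + c) + (b + v + c) + e + c"
  by (cases a; cases b; cases e; cases u; cases v; cases c) simp_all

lemma bit_rearr2: "(p::bit) + q + r + c + c = p + c + (q + c) + r"
  by (cases p; cases q; cases r; cases c) simp_all

lemma bit_rearr3: "(p::bit) + (p + q + r + s) = q + s + r"
  by (cases p; cases q; cases r; cases s) simp_all

theorem mainTheorem4:
  fixes F :: "bit ^ 'n \<Rightarrow> bit ^ 'n"
  assumes "even CARD('n)"
    and "is_quadratic F"
    and "is_APN F"
    and "b \<noteq> 0"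
    and "dimF2 (Vset F b) \<ge> 1"
  shows "even (dimF2 (Vset F b))"
proof -
  obtain Q l c where hf: "\<And>x. dotp b (F x) = (\<Sum>i\<in>UNIV. \<Sum>j\<in>UNIV. Q i j * x $ i * x $ j)
                         + (\<Sum>i\<in>UNIV. l i * x $ i) + c"
    using assms(2) unfolding is_quadratic_def by blast
  define f where "f x = dotp b (F x)" for x
  define \<beta> where "\<beta> x y = (\<Sum>i\<in>UNIV. \<Sum>j\<in>UNIV. Q i j * (x $ i * y $ j + y $ i * x $ j))"
    for x y :: "bit^'n"
  have polf: "f (x + y) = f x + f y + \<beta> x y + c" for x y
  proof -
    have "(\<Sum>i\<in>UNIV. \<Sum>j\<in>UNIV. Q i j * (x+y) $ i * (x+y) $ j)
        = (\<Sum>i\<in>UNIV. \<Sum>j\<in>UNIV. Q i j * x $ i * x $ j + Q i j * y $ i * y $ j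
              + Q i j * (x $ i * y $ j + y $ i * x $ j))"
      by (intro sum.cong refl) (simp add: algebra_simps)
    also have "\<dots> = (\<Sum>i\<in>UNIV. \<Sum>j\<in>UNIV. Q i j * x $ i * x $ j)
        + (\<Sum>i\<in>UNIV. \<Sum>j\<in>UNIV. Q i j * y $ i * y $ j) + \<beta> x y"
      by (simp add: sum.distrib \<beta>_def)
    finally have q: "(\<Sum>i\<in>UNIV. \<Sum>j\<in>UNIV. Q i j * (x+y) $ i * (x+y) $ j)
        = (\<Sum>i\<in>UNIV. \<Sum>j\<in>UNIV. Q i j * x $ i * x $ j)
        + (\<Sum>i\<in>UNIV. \<Sum>j\<in>UNIV. Q i j * y $ i * y $ j) + \<beta> x y" .
    have lp: "(\<Sum>i\<in>UNIV. l i * (x+y) $ i) = (\<Sum>i\<in>UNIV. l i * x $ i) + (\<Sum>i\<in>UNIV. l i * y $ i)"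
      by (simp add: distrib_left sum.distrib)
    show ?thesis unfolding f_def hf q lp by (rule bit_rearr1)
  qed
  define g where "g x = f x + c" for x
  have polg: "g (x + y) = g x + g y + \<beta> x y" for x y
    unfolding g_def polf by (rule bit_rearr2)
  have lin1: "\<beta> (x + x') y = \<beta> x y + \<beta> x' y" for x x' y
  proof -
    have "\<beta> (x + x') y = (\<Sum>i\<in>UNIV. \<Sum>j\<in>UNIV. Q i j * (x $ i * y $ j + y $ i * x $ j)
        + Q i j * (x' $ i * y $ j + y $ i * x' $ j))"
      unfolding \<beta>_def by (intro sum.cong refl) (simp add: algebra_simps)
    thus ?thesis by (simp add: sum.distrib \<beta>_def)
  qed
  have lin2: "\<beta> x (y + y') = \<beta> x y + \<beta> x y'" for x y y'
  proof -
    have "\<beta> x (y + y') = (\<Sum>i\<in>UNIV. \<Sum>j\<in>UNIV. Q i j * (x $ i * y $ j + y $ i * x $ j)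
        + Q i j * (x $ i * y' $ j + y' $ i * x $ j))"
      unfolding \<beta>_def by (intro sum.cong refl) (simp add: algebra_simps)
    thus ?thesis by (simp add: sum.distrib \<beta>_def)
  qed
  have ev: "even (vec.dim {a. \<forall>x. \<beta> x a = 0})"
    by (rule radical_even[OF polg lin1 lin2 assms(1)])
  have b0l: "\<beta> 0 y = 0" for y using lin1[of 0 0 y] by (intro bit_double_zero) simp
  have b0r: "\<beta> x 0 = 0" for x using lin2[of x 0 0] by (intro bit_double_zero) simp
  have Dval: "dotp b (Dder F a x) = f a + c + \<beta> x a" for a x
    unfolding Dder_def dotp_add_right f_def[symmetric] polf by (rule bit_rearr3)
  have VR: "Vset F b = {a. \<forall>x. \<beta> x a = 0}"
  proof (intro set_eqI iffI)
    fix a assume "a \<in> Vset F b"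
    then consider "a = 0" | "range (Dder F a) = Hyp b" | "range (Dder F a) = Hypbar b"
      unfolding Vset_def Tset_def Tbarset_def by blast
    thus "a \<in> {a. \<forall>x. \<beta> x a = 0}"
    proof cases
      case 1 then show ?thesis using b0r by simp
    next
      case 2
      have h: "f a + c + \<beta> x a = 0" for x
      proof -
        have "Dder F a x \<in> Hyp b" using 2 by blast
        thus ?thesis using Dval[of a x] by (simp add: Hyp_def)
      qed
      have "f a + c = 0" using h[of 0] b0l by simp
      thus ?thesis using h by simp
    next
      case 3
      have h: "f a + c + \<beta> x a = 1" for x
      proof -
        have "Dder F a x \<in> Hypbar b" using 3 by blast
        thus ?thesis using Dval[of a x] by (simp add: Hypbar_def)
      qed
      have "f a + c = 1" using h[of 0] b0l by simp
      thus ?thesis using h by (simp add: bit_one_add_eq_one)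
    qed
  next
    fix a assume a: "a \<in> {a. \<forall>x. \<beta> x a = 0}"
    show "a \<in> Vset F b"
    proof (cases "a = 0")
      case True thus ?thesis by (simp add: Vset_def Tset_def)
    next
      case False
      define e where "e = f a + c"
      have sub: "range (Dder F a) \<subseteq> {y. dotp b y = e}"
        using a by (auto simp: Dval e_def)
      have "card {y. dotp b y = e} \<le> card (range (Dder F a))"
        using card_hyper[OF assms(4), of e] APN_range[OF assms(3) False] by simp
      moreover have "card (range (Dder F a)) \<le> card {y. dotp b y = e}"
        using sub by (intro card_mono) simp_all
      ultimately have "card (range (Dder F a)) = card {y. dotp b y = e}" by simp
      hence eq: "range (Dder F a) = {y. dotp b y = e}"
        using sub by (intro card_subset_eq) simp_all
      have "e = 0 \<or> e = 1" by (cases e) auto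
      thus ?thesis
        using eq by (auto simp: Vset_def Tset_def Tbarset_def Hyp_def Hypbar_def)
    qed
  qed
  show ?thesis unfolding dimF2_def VR using ev .
qed

end
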